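(* Let $\mathfrak g$ be a complex Lie algebra and $A_0,A_1\in\mathfrak g$. Put $G_1=\frac14[A_1,A_0]$ and define elements $A_m$ ($m\in\mathbb Z$) recursively (in both directions) by $A_{m-1}-A_{m+1}=\frac12[A_m,G_1]$, and then $G_m=\frac14[A_m,A_0]$ for all $m\in\mathbb Z$. The following are equivalent: (I) (Dolan–Grady condition) $[A_1,[A_1,[A_1,A_0]]]=16[A_1,A_0]$ and $[A_0,[A_0,[A_0,A_1]]]=16[A_0,A_1]$; (II) for all $m,l\in\mathbb Z$: $[A_m,A_l]=4G_{m-l}$, $[A_m,G_l]=2A_{m-l}-2A_{m+l}$, $[G_m,G_l]=0$.
   Context: All Lie algebras are over $\mathbb C$. *)

theory Defs
  imports Complex_Main
begin

definition lie_algebra ::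
  "(complex \<Rightarrow> 'a::ab_group_add \<Rightarrow> 'a) \<Rightarrow> ('a \<Rightarrow> 'a \<Rightarrow> 'a) \<Rightarrow> bool" where
  "lie_algebra scale br \<longleftrightarrow>
     vector_space scale \<and>
     (\<forall>x y z. br (x + y) z = br x z + br y z) \<and>
     (\<forall>x y z. br x (y + z) = br x y + br x z) \<and>
     (\<forall>c x y. br (scale c x) y = scale c (br x y)) \<and>
     (\<forall>c x y. br x (scale c y) = scale c (br x y)) \<and>
     (\<forall>x. br x x = 0) \<and>
     (\<forall>x y z. br x (br y z) + br y (br z x) + br z (br x y) = 0)"

end

theory Submission
  imports Defs
begin

locale lie =
  fixes scale :: "complex \<Rightarrow> 'a::ab_group_add \<Rightarrow> 'a"
    and br :: "'a \<Rightarrow> 'a \<Rightarrow> 'a"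
  assumes L: "lie_algebra scale br"
begin

sublocale vs: vector_space scale
  using L unfolding lie_algebra_def by blast

lemma brl_add: "br (x + y) z = br x z + br y z"
  using L unfolding lie_algebra_def by blast
lemma brr_add: "br x (y + z) = br x y + br x z"
  using L unfolding lie_algebra_def by blast
lemma br_scale_l: "br (scale c x) y = scale c (br x y)"
  using L unfolding lie_algebra_def by blast
lemma br_scale_r: "br x (scale c y) = scale c (br x y)"
  using L unfolding lie_algebra_def by blast
lemma br_self[simp]: "br x x = 0"
  using L unfolding lie_algebra_def by blast
lemma jacobi0: "br x (br y z) + br y (br z x) + br z (br x y) = 0"
  using L unfolding lie_algebra_def by blast

lemma br_zero_l[simp]: "br 0 y = 0"
proof -
  have "br 0 y = br 0 y + br 0 y" using brl_add[of 0 0 y] by (simp only: add_0_left)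
  thus ?thesis by (metis add_cancel_right_right)
qed
lemma br_zero_r[simp]: "br y 0 = 0"
proof -
  have "br y 0 = br y 0 + br y 0" using brr_add[of y 0 0] by (simp only: add_0_left)
  thus ?thesis by (metis add_cancel_right_right)
qed
lemma br_neg_l: "br (- x) y = - br x y"
proof -
  have "br x y + br (- x) y = 0" using brl_add[of x "-x" y] by simp
  thus ?thesis by (rule minus_unique[symmetric])
qed
lemma br_neg_r: "br y (- x) = - br y x"
proof -
  have "br y x + br y (- x) = 0" using brr_add[of y x "-x"] by simp
  thus ?thesis by (rule minus_unique[symmetric])
qed
lemma br_diff_l: "br (x - y) z = br x z - br y z"
  by (simp only: diff_conv_add_uminus brl_add br_neg_l)
lemma br_diff_r: "br z (x - y) = br z x - br z y"
  by (simp only: diff_conv_add_uminus brr_add br_neg_r)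
lemma br_anti: "br y x = - br x y"
proof -
  have "0 = br (x + y) (x + y)" by simp
  also have "\<dots> = br x x + br y x + (br x y + br y y)" by (simp only: brl_add brr_add)
  also have "\<dots> = br x y + br y x" by (simp add: add.commute)
  finally have h: "br x y + br y x = 0" by (rule sym)
  thus ?thesis by (rule minus_unique[symmetric])
qed
lemma jac: "br x (br y z) = br (br x y) z + br y (br x z)"
proof -
  have e1: "br y (br z x) = - br y (br x z)" by (simp only: br_anti[of x z] br_neg_r minus_minus)
  have e2: "br z (br x y) = - br (br x y) z" by (rule br_anti)
  have "br x (br y z) + - br y (br x z) + - br (br x y) z = 0"
    using jacobi0[of x y z] unfolding e1 e2 .
  hence "br x (br y z) - br y (br x z) - br (br x y) z = 0" by (simp only: diff_conv_add_uminus)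
  thus ?thesis by (simp add: algebra_simps)
qed

lemmas lin = brl_add brr_add br_neg_l br_neg_r br_diff_l br_diff_r br_scale_l br_scale_r
  vs.scale_right_distrib vs.scale_right_diff_distrib vs.scale_scale

lemma comb1: "scale a x + scale b x = scale (a + b) x"
  by (simp add: vs.scale_left_distrib)


definition okd :: "'a \<Rightarrow> (int \<times> 'a) list \<Rightarrow> bool" where
  "okd u ps \<longleftrightarrow> (\<forall>p\<in>set ps. br u (snd p) = scale (of_int (4 * fst p)) (snd p))"
definition sd :: "(int \<times> 'a) list \<Rightarrow> 'a" where
  "sd ps = sum_list (map snd ps)"
definition gsum :: "(int \<Rightarrow> complex) \<Rightarrow> (int \<times> 'a) list \<Rightarrow> 'a" where
  "gsum \<rho> ps = sum_list (map (\<lambda>p. scale (\<rho> (fst p)) (snd p)) ps)"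
definition fsum :: "int \<Rightarrow> (int \<times> 'a) list \<Rightarrow> 'a" where
  "fsum w ps = sd (filter (\<lambda>p. fst p = w) ps)"
definition smap :: "complex \<Rightarrow> (int \<times> 'a) list \<Rightarrow> (int \<times> 'a) list" where
  "smap c ps = map (\<lambda>p. (fst p, scale c (snd p))) ps"

lemma sd_simps[simp]: "sd [] = 0" "sd (p # ps) = snd p + sd ps" "sd (ps @ qs) = sd ps + sd qs"
  by (simp_all add: sd_def)
lemma gsum_simps[simp]: "gsum r [] = 0" "gsum r (p # ps) = scale (r (fst p)) (snd p) + gsum r ps"
  "gsum r (ps @ qs) = gsum r ps + gsum r qs"
  by (simp_all add: gsum_def)
lemma okd_simps[simp]: "okd u []" "okd u (p # ps) \<longleftrightarrow> br u (snd p) = scale (of_int (4 * fst p)) (snd p) \<and> okd u ps"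
  "okd u (ps @ qs) \<longleftrightarrow> okd u ps \<and> okd u qs"
  by (auto simp: okd_def)
lemma fsum_simps[simp]: "fsum w [] = 0" "fsum w (p # ps) = (if fst p = w then snd p + fsum w ps else fsum w ps)"
  by (simp_all add: fsum_def)

lemma group:
  assumes "finite W" "fst ` set ps \<subseteq> W"
  shows "gsum r ps = (\<Sum>w\<in>W. scale (r w) (fsum w ps))"
  using assms(2)
proof (induction ps)
  case Nil
  then show ?case by simp
next
  case (Cons p ps)
  have "(\<Sum>w\<in>W. scale (r w) (fsum w (p # ps))) =
        (\<Sum>w\<in>W. (if fst p = w then scale (r w) (snd p) else 0) + scale (r w) (fsum w ps))"
    by (rule sum.cong) (auto simp: vs.scale_right_distrib)
  also have "\<dots> = (\<Sum>w\<in>W. (if fst p = w then scale (r w) (snd p) else 0)) + (\<Sum>w\<in>W. scale (r w) (fsum w ps))"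
    by (rule sum.distrib)
  also have "(\<Sum>w\<in>W. (if fst p = w then scale (r w) (snd p) else 0)) = scale (r (fst p)) (snd p)"
    using Cons.prems assms(1) by (simp add: sum.delta)
  finally show ?case using Cons by simp
qed

lemma gsum_one: "gsum (\<lambda>_. 1) ps = sd ps"
  by (induction ps) auto

lemma smap_simps[simp]: "sd (smap c ps) = scale c (sd ps)" "gsum r (smap c ps) = scale c (gsum r ps)"
  "fst ` set (smap c ps) = fst ` set ps"
  by (induction ps) (auto simp: smap_def vs.scale_right_distrib vs.scale_left_commute)

lemma okd_smap: "okd u ps \<Longrightarrow> okd u (smap c ps)"
  by (induction ps) (auto simp: smap_def br_scale_r vs.scale_left_commute)

lemma brsum: "okd u ps \<Longrightarrow> br u (sd ps) = gsum (\<lambda>w. of_int (4 * w)) ps"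
  by (induction ps) (auto simp: brr_add)

lemma gsum_diff: "gsum (\<lambda>w. f w - g w) ps = gsum f ps - gsum g ps"
  by (induction ps) (auto simp: vs.scale_left_diff_distrib)

lemma gsum_const: "gsum (\<lambda>w. c) ps = scale c (sd ps)"
  by (induction ps) (auto simp: vs.scale_right_distrib)

definition fmap :: "(int \<Rightarrow> complex) \<Rightarrow> int \<Rightarrow> (int \<times> 'a) list \<Rightarrow> (int \<times> 'a) list" where
  "fmap h a ps = map (\<lambda>p. (fst p, scale (h (fst p)) (snd p))) (filter (\<lambda>p. fst p \<noteq> a) ps)"

lemma fmap_sd: "h a = 0 \<Longrightarrow> sd (fmap h a ps) = gsum h ps"
  by (induction ps) (auto simp: fmap_def)

lemma fmap_fsum: "w \<noteq> a \<Longrightarrow> fsum w (fmap h a ps) = scale (h w) (fsum w ps)"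
  by (induction ps) (auto simp: fmap_def vs.scale_right_distrib)

lemma fmap_set: "fst ` set (fmap h a ps) \<subseteq> fst ` set ps - {a}"
  by (force simp: fmap_def)

lemma fmap_okd: "okd u ps \<Longrightarrow> okd u (fmap h a ps)"
  by (induction ps) (auto simp: fmap_def br_scale_r vs.scale_left_commute)

lemma fsum_out: "w \<notin> fst ` set ps \<Longrightarrow> fsum w ps = 0"
  by (induction ps) auto

lemma indep:
  assumes "finite W" "fst ` set ps \<subseteq> W" "okd u ps" "sd ps = 0"
  shows "fsum w ps = 0"
  using assms
proof (induction W arbitrary: ps w rule: finite_induct)
  case empty
  then show ?case by simp
next
  case (insert a W)
  define h where "h = (\<lambda>x::int. (of_int (4 * x) :: complex) - of_int (4 * a))"
  define qs where "qs = fmap h a ps"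
  have okq: "okd u qs" unfolding qs_def using insert.prems by (simp add: fmap_okd)
  have setq: "fst ` set qs \<subseteq> W" unfolding qs_def using fmap_set[of h a ps] insert.prems by blast
  have "sd qs = gsum h ps" unfolding qs_def by (rule fmap_sd) (simp add: h_def)
  also have "\<dots> = br u (sd ps) - scale (of_int (4 * a)) (sd ps)"
    unfolding h_def gsum_diff gsum_const brsum[OF insert.prems(2)] ..
  also have "\<dots> = 0" using insert.prems by simp
  finally have sq: "sd qs = 0" .
  have ne: "fsum w ps = 0" if "w \<noteq> a" for w
  proof -
    have "fsum w qs = 0" using insert.IH[OF setq okq sq] .
    hence "scale (h w) (fsum w ps) = 0" unfolding qs_def fmap_fsum[OF that] .
    moreover have "h w \<noteq> 0" using that by (simp add: h_def)
    ultimately show ?thesis by simp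
  qed
  show ?case
  proof (cases "w = a")
    case False
    then show ?thesis by (rule ne)
  next
    case True
    have "sd ps = (\<Sum>w\<in>insert a W. scale 1 (fsum w ps))"
      using group[OF _ insert.prems(1), of "\<lambda>_. 1"] insert.hyps by (simp add: gsum_one)
    also have "\<dots> = fsum a ps + (\<Sum>w\<in>W. fsum w ps)" using insert.hyps by simp
    also have "(\<Sum>w\<in>W. fsum w ps) = 0" using ne insert.hyps by (intro sum.neutral) (metis)
    finally show ?thesis using True insert.prems by simp
  qed
qed

lemma gzero: "okd u ps \<Longrightarrow> sd ps = 0 \<Longrightarrow> gsum r ps = 0"
  using group[of "fst ` set ps" ps r] indep[of "fst ` set ps" ps u] by simp


definition sg :: "int \<Rightarrow> complex" where "sg w = (if even w then 1 else -1)"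

lemma sg_add: "sg (a + b) = sg a * sg b"
  by (simp add: sg_def)

definition Rel :: "'a \<Rightarrow> 'a \<Rightarrow> 'a \<Rightarrow> bool" where
  "Rel u x y \<longleftrightarrow> (\<exists>ps. okd u ps \<and> sd ps = x \<and> gsum sg ps = y)"

lemma Rel_fun: assumes "Rel u x y" "Rel u x y'" shows "y = y'"
proof -
  obtain ps where p: "okd u ps" "sd ps = x" "gsum sg ps = y" using assms(1) Rel_def by auto
  obtain qs where q: "okd u qs" "sd qs = x" "gsum sg qs = y'" using assms(2) Rel_def by auto
  let ?rs = "ps @ smap (-1) qs"
  have "okd u ?rs" using p q okd_smap by simp
  moreover have "sd ?rs = 0" using p q by (simp add: vs.scale_minus_left)
  ultimately have "gsum sg ?rs = 0" by (rule gzero)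
  hence "y - y' = 0" using p q by (simp add: vs.scale_minus_left)
  thus ?thesis by simp
qed

lemma Rel_add: assumes "Rel u x y" "Rel u x' y'" shows "Rel u (x + x') (y + y')"
proof -
  obtain ps where p: "okd u ps" "sd ps = x" "gsum sg ps = y" using assms(1) Rel_def by auto
  obtain qs where q: "okd u qs" "sd qs = x'" "gsum sg qs = y'" using assms(2) Rel_def by auto
  show ?thesis unfolding Rel_def by (rule exI[of _ "ps @ qs"]) (use p q in simp)
qed

lemma Rel_scale: assumes "Rel u x y" shows "Rel u (scale c x) (scale c y)"
proof -
  obtain ps where p: "okd u ps" "sd ps = x" "gsum sg ps = y" using assms(1) Rel_def by auto
  show ?thesis unfolding Rel_def by (rule exI[of _ "smap c ps"]) (use p okd_smap in simp)
qed

lemma Rel_neg: assumes "Rel u x y" shows "Rel u (- x) (- y)"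
  using Rel_scale[OF assms, of "-1"] by (simp add: vs.scale_minus_left)

lemma Rel_diff: assumes "Rel u x y" "Rel u x' y'" shows "Rel u (x - x') (y - y')"
  using Rel_add[OF assms(1) Rel_neg[OF assms(2)]] by simp

definition prodl :: "(int \<times> 'a) list \<Rightarrow> (int \<times> 'a) list \<Rightarrow> (int \<times> 'a) list" where
  "prodl ps qs = concat (map (\<lambda>p. map (\<lambda>q. (fst p + fst q, br (snd p) (snd q))) qs) ps)"

lemma prodl_okd: assumes "okd u ps" "okd u qs" shows "okd u (prodl ps qs)"
proof -
  have "br u (br e f) = scale (of_int (4 * (a + b))) (br e f)"
    if "br u e = scale (of_int (4 * a)) e" "br u f = scale (of_int (4 * b)) f" for e f a b
  proof -
    have "br u (br e f) = br (br u e) f + br e (br u f)" by (rule jac)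
    also have "\<dots> = scale (of_int (4 * a)) (br e f) + scale (of_int (4 * b)) (br e f)"
      using that by (simp add: br_scale_l br_scale_r)
    also have "\<dots> = scale (of_int (4 * (a + b))) (br e f)"
      by (simp only: vs.scale_left_distrib[symmetric] distrib_left of_int_add)
    finally show ?thesis .
  qed
  thus ?thesis using assms unfolding okd_def prodl_def by auto
qed

lemma prodl_sd: "sd (prodl ps qs) = br (sd ps) (sd qs)"
proof -
  have a: "sd (map (\<lambda>q. (w + fst q, br e (snd q))) qs) = br e (sd qs)" for w e
    by (induction qs) (auto simp: brr_add)
  show ?thesis unfolding prodl_def by (induction ps) (auto simp: a brl_add)
qed

lemma prodl_gsum: "gsum sg (prodl ps qs) = br (gsum sg ps) (gsum sg qs)"
proof -
  have a: "gsum sg (map (\<lambda>q. (w + fst q, br e (snd q))) qs) = br (scale (sg w) e) (gsum sg qs)" for w e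
    by (induction qs) (simp_all add: brr_add sg_add br_scale_l br_scale_r vs.scale_scale mult_ac)
  show ?thesis unfolding prodl_def by (induction ps) (auto simp: a brl_add)
qed

lemma Rel_br: assumes "Rel u x y" "Rel u x' y'" shows "Rel u (br x x') (br y y')"
proof -
  obtain ps where p: "okd u ps" "sd ps = x" "gsum sg ps = y" using assms(1) Rel_def by auto
  obtain qs where q: "okd u qs" "sd qs = x'" "gsum sg qs = y'" using assms(2) Rel_def by auto
  show ?thesis unfolding Rel_def
    by (rule exI[of _ "prodl ps qs"]) (use p q prodl_okd prodl_sd prodl_gsum in simp)
qed

lemma Rel_single: "br u e = scale (of_int (4 * w)) e \<Longrightarrow> Rel u e (scale (sg w) e)"
  unfolding Rel_def by (rule exI[of _ "[(w, e)]"]) simp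


lemma comb_c1: "scale a x + scale b x = scale (a + b) x"
  by (simp add: vs.scale_left_distrib)
lemma comb_c2: "scale a x + (scale b x + y) = scale (a + b) x + y"
  by (simp add: vs.scale_left_distrib add.assoc)
lemma comb_c3: "scale a x - scale b x = scale (a - b) x"
  by (simp add: vs.scale_left_diff_distrib)
lemma comb_c4: "scale a x + (scale b x - y) = scale (a + b) x - y"
  by (simp add: vs.scale_left_distrib add_diff_eq)
lemmas comb = comb_c1 comb_c2 comb_c3 comb_c4

lemma two_scale: "scale 2 x = x + x"
  using vs.scale_left_distrib[of 1 1 x] by simp

lemma sub_solve: "a - b = (c::'b::ab_group_add) \<Longrightarrow> b = a - c"
  by (simp add: algebra_simps)

lemma rec8:
  assumes rec: "\<And>m::int. A (m - 1) - A (m + 1) = scale (1/2) (br (A m) (scale (1/4) (br (A 1) (A 0))))"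
  shows "br (A m) (br (A 1) (A 0)) = scale 8 (A (m - 1) - A (m + 1))"
  by (simp only: rec br_scale_r vs.scale_scale) simp

lemma theta_step:
  fixes A :: "int \<Rightarrow> 'a" and k :: nat
  assumes rec: "\<And>m::int. A (m - 1) - A (m + 1) = scale (1/2) (br (A m) (scale (1/4) (br (A 1) (A 0))))"
    and dg0: "br (A 0) (br (A 0) (br (A 0) (A 1))) = scale 16 (br (A 0) (A 1))"
    and hk: "br (A (int k + 1)) (A (int k)) = br (A 1) (A 0)"
  shows "br (A (- int k)) (A (- int k - 1)) = br (A 1) (A 0)"
proof -
  define u where "u = A 0"
  define v where "v = A 1"
  define z where "z = br v u"
  define X1 where "X1 = br u v"
  define X2 where "X2 = br u X1"
  have X3: "br u X2 = scale 16 X1" using dg0 unfolding X2_def X1_def u_def v_def .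
  have X1z: "X1 = - z" unfolding X1_def z_def by (rule br_anti)
  have Am1: "A (-1) = v - scale (1/8) X2"
  proof -
    have "br u z = scale 8 (A (0 - 1) - A (0 + 1))" using rec8[OF rec, of 0] unfolding u_def v_def z_def .
    hence "br u z = scale 8 (A (-1) - v)" by (simp add: v_def)
    hence "scale (1/8) (br u z) = A (-1) - v" by simp
    hence "A (-1) = v + scale (1/8) (br u z)" by (simp add: algebra_simps)
    also have "br u z = - X2" unfolding X2_def X1z by (simp add: br_neg_r)
    finally show ?thesis by simp
  qed
  define v0 where "v0 = v - scale (1/16) X2"
  define vp where "vp = scale (1/32) (X2 + scale 4 X1)"
  define vm where "vm = scale (1/32) (X2 - scale 4 X1)"
  have "br u v0 = scale (of_int (4 * 0)) v0"
    unfolding v0_def by (simp add: br_diff_r br_scale_r X3 flip: X1_def)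
  hence R0: "Rel u v0 v0" using Rel_single[of u v0 0] by (simp add: sg_def)
  have "br u vp = scale (of_int (4 * 1)) vp"
    unfolding vp_def by (simp only: brr_add br_scale_r X3 flip: X2_def X1_def) (simp add: lin add_ac)
  hence Rp: "Rel u vp (- vp)" using Rel_single[of u vp 1] by (simp add: sg_def vs.scale_minus_left)
  have "br u vm = scale (of_int (4 * -1)) vm"
    unfolding vm_def by (simp only: br_diff_r br_scale_r X3 flip: X2_def X1_def) (simp add: lin add_ac)
  hence Rm: "Rel u vm (- vm)" using Rel_single[of u vm "-1"] by (simp add: sg_def vs.scale_minus_left)
  have Rs: "Rel u (v0 + vp + vm) (v0 + - vp + - vm)" by (intro Rel_add R0 Rp Rm)
  have pm: "vp + vm = scale (1/16) X2" unfolding vp_def vm_def by (simp add: lin add_ac) (simp add: comb)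
  moreover have "v0 + vp + vm = v" unfolding v0_def add.assoc pm by simp
  moreover have "v0 + - vp + - vm = A (-1)"
  proof -
    have "v0 + - vp + - vm = v0 - (vp + vm)" by (simp add: algebra_simps)
    also have "\<dots> = v - (scale (1/16) X2 + scale (1/16) X2)" unfolding pm v0_def by (simp add: algebra_simps)
    also have "\<dots> = A (-1)" unfolding Am1 comb_c1 by simp
    finally show ?thesis .
  qed
  ultimately have R1: "Rel u (A 1) (A (-1))" using Rs by (simp add: v_def)
  have R00: "Rel u (A 0) (A 0)" using Rel_single[of u u 0] by (simp add: sg_def u_def)
  have "br (A (-1)) u = - z"
  proof -
    have "br X2 u = - scale 16 X1" using X3 br_anti[of u X2] by (metis minus_minus)
    thus ?thesis unfolding Am1 X1z by (simp add: br_diff_l br_scale_l flip: z_def) (simp add: lin two_scale)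
  qed
  hence Rz: "Rel u z (- z)" using Rel_br[OF R1 R00] by (simp add: z_def u_def v_def)
  hence Rg: "Rel u (scale (1/4) z) (scale (1/4) (- z))" by (rule Rel_scale)
  have P: "Rel u (A (int n)) (A (- int n)) \<and> Rel u (A (int n + 1)) (A (- int n - 1))" for n
  proof (induction n)
    case 0
    then show ?case using R00 R1 by simp
  next
    case (Suc n)
    have i1: "int n + 1 - 1 = int n" "int n + 1 + 1 = int (Suc n) + 1" by simp_all
    have i3: "int (Suc n) = int n + 1" "- int (Suc n) = - int n - 1" "- (int n + 1) = - int n - 1" by simp_all
    have i2: "- int n - 1 - 1 = - int (Suc n) - 1" "- int n - 1 + 1 = - int n" by simp_all
    have e1: "A (int (Suc n) + 1) = A (int n) - scale (1/2) (br (A (int n + 1)) (scale (1/4) z))"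
      using rec[of "int n + 1"] unfolding i1 z_def u_def v_def by (rule sub_solve)
    have e2: "A (- int (Suc n) - 1) = A (- int n) - scale (1/2) (br (A (- int n - 1)) (scale (1/4) (- z)))"
    proof -
      have "A (- int n) - A (- int (Suc n) - 1) = - scale (1/2) (br (A (- int n - 1)) (scale (1/4) z))"
        using rec[of "- int n - 1"] unfolding i2 z_def u_def v_def by (simp add: algebra_simps)
      hence "A (- int (Suc n) - 1) = A (- int n) - - scale (1/2) (br (A (- int n - 1)) (scale (1/4) z))"
        by (rule sub_solve)
      thus ?thesis by (simp add: lin)
    qed
    have "Rel u (A (int (Suc n) + 1)) (A (- int (Suc n) - 1))"
      unfolding e1 e2 using Suc by (intro Rel_diff Rel_scale Rel_br Rg) auto
    thus ?case using Suc by (simp only: i3)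
  qed
  have "Rel u (br (A (int k + 1)) (A (int k))) (br (A (- int k - 1)) (A (- int k)))"
    using P[of k] by (intro Rel_br) auto
  hence "Rel u z (br (A (- int k - 1)) (A (- int k)))" unfolding hk by (simp add: z_def u_def v_def)
  hence "br (A (- int k - 1)) (A (- int k)) = - z" using Rz by (rule Rel_fun)
  thus ?thesis using br_anti[of "A (- int k)" "A (- int k - 1)"] by (simp add: z_def u_def v_def)
qed


lemma H_all:
  fixes A :: "int \<Rightarrow> 'a"
  assumes rec: "\<And>m::int. A (m - 1) - A (m + 1) = scale (1/2) (br (A m) (scale (1/4) (br (A 1) (A 0))))"
    and dg1: "br (A 1) (br (A 1) (br (A 1) (A 0))) = scale 16 (br (A 1) (A 0))"
    and dg0: "br (A 0) (br (A 0) (br (A 0) (A 1))) = scale 16 (br (A 0) (A 1))"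
  shows "br (A (k + 1)) (A k) = br (A 1) (A 0)"
proof -
  define z where "z = br (A 1) (A 0)"
  define B where "B m = A (1 - m)" for m
  have recB: "B (m - 1) - B (m + 1) = scale (1/2) (br (B m) (scale (1/4) (br (B 1) (B 0))))" for m
  proof -
    have "A (1 - m - 1) - A (1 - m + 1) = scale (1/2) (br (A (1 - m)) (scale (1/4) z))"
      using rec[of "1 - m"] by (simp add: z_def)
    hence "A (- m) - A (2 - m) = scale (1/2) (br (A (1 - m)) (scale (1/4) z))" by simp
    hence "A (2 - m) - A (- m) = - scale (1/2) (br (A (1 - m)) (scale (1/4) z))"
      by (metis minus_diff_eq)
    moreover have "br (A 0) (A 1) = - z" unfolding z_def by (rule br_anti)
    ultimately show ?thesis unfolding B_def by (simp add: lin)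
  qed
  have dgB: "br (B 0) (br (B 0) (br (B 0) (B 1))) = scale 16 (br (B 0) (B 1))"
    unfolding B_def using dg1 by simp
  have tA: "br (A (- int n)) (A (- int n - 1)) = z" if "br (A (int n + 1)) (A (int n)) = z" for n
    using theta_step[OF rec dg0, of n] that unfolding z_def by simp
  have tB: "br (A (int n + 2)) (A (int n + 1)) = z" if "br (A (- int n + 1)) (A (- int n)) = z" for n
  proof -
    have "br (B (int n + 1)) (B (int n)) = br (B 1) (B 0)"
    proof -
      have "br (B (int n + 1)) (B (int n)) = br (A (- int n)) (A (1 - int n))" unfolding B_def by simp
      also have "\<dots> = - br (A (1 - int n)) (A (- int n))" by (rule br_anti)
      also have "\<dots> = - z" using that by (simp add: add.commute)
      also have "\<dots> = br (B 1) (B 0)" unfolding B_def z_def using br_anti[of "A 1" "A 0"] by simp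
      finally show ?thesis .
    qed
    hence "br (B (- int n)) (B (- int n - 1)) = br (B 1) (B 0)" by (rule theta_step[OF recB dgB])
    hence "br (A (1 + int n)) (A (2 + int n)) = br (A 0) (A 1)" unfolding B_def by (simp add: algebra_simps)
    hence "- br (A (2 + int n)) (A (1 + int n)) = - z"
      using br_anti[of "A (2 + int n)" "A (1 + int n)"] br_anti[of "A 1" "A 0"] by (simp add: z_def)
    thus ?thesis by (simp add: add.commute)
  qed
  have P: "br (A (int n + 1)) (A (int n)) = z \<and> br (A (int n + 2)) (A (int n + 1)) = z" for n
  proof (induction n)
    case 0
    have h0: "br (A (- int 0 + 1)) (A (- int 0)) = z" by (simp add: z_def)
    have "br (A (int 0 + 2)) (A (int 0 + 1)) = z" using h0 by (rule tB)
    then show ?case by (simp add: z_def)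
  next
    case (Suc n)
    have "br (A (- int n)) (A (- int n - 1)) = z" using tA Suc by blast
    moreover have eq: "A (- int (Suc n) + 1) = A (- int n)" "A (- int (Suc n)) = A (- int n - 1)" by (rule arg_cong[of _ _ A], simp)+
    ultimately have "br (A (- int (Suc n) + 1)) (A (- int (Suc n))) = z" unfolding eq by simp
    hence "br (A (int (Suc n) + 2)) (A (int (Suc n) + 1)) = z" by (rule tB)
    moreover have eq2: "A (int (Suc n) + 1) = A (int n + 2)" "A (int (Suc n)) = A (int n + 1)"
      "A (int (Suc n) + 2) = A (int n + 3)" by (rule arg_cong[of _ _ A], simp)+
    ultimately show ?case using Suc unfolding eq2 by simp
  qed
  show ?thesis
  proof (cases "k \<ge> 0")
    case True
    then obtain n where "k = int n" by (metis nonneg_eq_int)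
    then show ?thesis using P[of n] by (simp add: z_def)
  next
    case False
    define n where "n = nat (- k - 1)"
    have n: "k = - int n - 1" using False unfolding n_def by simp
    have "br (A (- int n)) (A (- int n - 1)) = z" using tA P[of n] by blast
    moreover have "k + 1 = - int n" "k = - int n - 1" using n by simp_all
    ultimately show ?thesis by (simp only: z_def)
  qed
qed


lemma scale8_cancel: "scale 8 (a - b) = 0 \<Longrightarrow> a = b"
  by simp

lemma relA:
  fixes A :: "int \<Rightarrow> 'a" and n :: nat
  assumes rec: "\<And>m::int. A (m - 1) - A (m + 1) = scale (1/2) (br (A m) (scale (1/4) (br (A 1) (A 0))))"
    and Hall: "\<And>k. br (A (k + 1)) (A k) = br (A 1) (A 0)"
    and Q: "\<And>j k. j \<le> n \<Longrightarrow> br (A (k + int j)) (A k) = br (A (int j)) (A 0)"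
    and ln: "l \<le> n"
  shows "br (A m) (br (A (int l)) (A 0)) = scale 8 (A (m - int l) - A (m + int l))"
  using ln
proof (induction l arbitrary: m)
  case 0
  then show ?case by simp
next
  case (Suc l)
  have g: "br (A (int (Suc l))) (A 0) = br (A (m + int l)) (A (m - 1))"
    using Q[of "Suc l" "m - 1", OF Suc.prems] by (metis add.commute add_diff_cancel_left' diff_add_eq of_nat_Suc)
  have a1: "br (A m) (A (m + int l)) = - br (A (int l)) (A 0)"
  proof -
    have "br (A m) (A (m + int l)) = - br (A (m + int l)) (A m)" by (rule br_anti)
    also have "\<dots> = - br (A (int l)) (A 0)" using Q[of l m] Suc.prems by simp
    finally show ?thesis .
  qed
  have a2: "br (A m) (A (m - 1)) = br (A 1) (A 0)"
    using Hall[of "m - 1"] by simp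
  have "br (A m) (br (A (int (Suc l))) (A 0))
      = br (br (A m) (A (m + int l))) (A (m - 1)) + br (A (m + int l)) (br (A m) (A (m - 1)))"
    unfolding g by (rule jac)
  also have "\<dots> = br (A (m - 1)) (br (A (int l)) (A 0)) + br (A (m + int l)) (br (A 1) (A 0))"
    unfolding a1 a2 br_neg_l using br_anti[of "A (m - 1)" "br (A (int l)) (A 0)"] by simp
  also have "\<dots> = scale 8 (A (m - 1 - int l) - A (m - 1 + int l)) + scale 8 (A (m + int l - 1) - A (m + int l + 1))"
    using Suc.IH[of "m - 1"] Suc.prems rec8[OF rec, of "m + int l"] by simp
  also have "\<dots> = scale 8 (A (m - int (Suc l)) - A (m + int (Suc l)))"
  proof -
    have "A (m - 1 - int l) = A (m - int (Suc l))" "A (m - 1 + int l) = A (m + int l - 1)"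
      "A (m + int l + 1) = A (m + int (Suc l))" by (rule arg_cong[of _ _ A], simp)+
    thus ?thesis by (simp add: vs.scale_right_distrib[symmetric])
  qed
  finally show ?case .
qed


lemma Qstep:
  fixes A :: "int \<Rightarrow> 'a" and n :: nat
  assumes rec: "\<And>m::int. A (m - 1) - A (m + 1) = scale (1/2) (br (A m) (scale (1/4) (br (A 1) (A 0))))"
    and Hall: "\<And>k. br (A (k + 1)) (A k) = br (A 1) (A 0)"
    and Q: "\<And>j k. j \<le> n \<Longrightarrow> br (A (k + int j)) (A k) = br (A (int j)) (A 0)"
    and n1: "1 \<le> n"
  shows "br (A (k + int (Suc n))) (A k) = br (A (int (Suc n))) (A 0)"
proof -
  define z where "z = br (A 1) (A 0)"
  define G where "G l = br (A l) (A 0)" for l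
  define D where "D k = br (A (k + int n + 1)) (A k)" for k
  define w where "w = br z (G (int n))"
  have r8: "br (A m) z = scale 8 (A (m - 1) - A (m + 1))" for m
    unfolding z_def by (rule rec8[OF rec])
  have r8': "br z (A m) = scale 8 (A (m + 1) - A (m - 1))" for m
    using r8[of m] br_anti[of z "A m"] by (simp add: algebra_simps)
  have RA: "br (A m) (G (int n)) = scale 8 (A (m - int n) - A (m + int n))" for m
    unfolding G_def by (rule relA[OF rec Hall Q]) auto
  have RG: "br (G (int n)) (A m) = scale 8 (A (m + int n) - A (m - int n))" for m
    using RA[of m] br_anti[of "G (int n)" "A m"] by (simp add: algebra_simps)
  have Qm1: "br (A (k + int n - 1)) (A k) = G (int n - 1)" for k
    using Q[of "n - 1" k] n1 unfolding G_def by (simp add: of_nat_diff algebra_simps)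
  have Qn: "br (A (k + int n)) (A k) = G (int n)" for k
    using Q[of n k] unfolding G_def by simp
  have star: "w = scale 8 (D k - D (k - 1))" for k
  proof -
    have "w = br z (br (A (k + int n)) (A k))" unfolding w_def Qn ..
    also have "\<dots> = br (br z (A (k + int n))) (A k) + br (A (k + int n)) (br z (A k))" by (rule jac)
    also have "\<dots> = scale 8 (br (A (k + int n + 1)) (A k) - br (A (k + int n - 1)) (A k))
                   + scale 8 (br (A (k + int n)) (A (k + 1)) - br (A (k + int n)) (A (k - 1)))"
      unfolding r8' by (simp add: lin)
    also have "br (A (k + int n)) (A (k + 1)) = br (A (k + int n - 1)) (A k)"
      using Qm1[of "k + 1"] Qm1[of k] by (simp add: algebra_simps)
    also have "br (A (k + int n)) (A (k - 1)) = D (k - 1)" unfolding D_def by simp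
    also have "br (A (k + int n + 1)) (A k) = D k" unfolding D_def ..
    finally show ?thesis by (simp add: vs.scale_right_distrib[symmetric])
  qed
  have E2: "br (G (int n)) z = scale 8 (D 0 - D (- int n))"
  proof -
    have b1: "br (A (1 - int n)) (A 0) = - G (int n - 1)"
      using Qm1[of "1 - int n"] br_anti[of "A (1 - int n)" "A 0"] by simp
    have b2: "br (A 1) (A (int n)) = - G (int n - 1)"
      using Qm1[of 1] br_anti[of "A 1" "A (int n)"] by (simp add: add.commute)
    have b3: "br (A (1 + int n)) (A 0) = D 0" unfolding D_def by (simp add: add.commute)
    have b4: "br (A 1) (A (- int n)) = D (- int n)" unfolding D_def by simp
    have "br (G (int n)) z = br (br (G (int n)) (A 1)) (A 0) + br (A 1) (br (G (int n)) (A 0))"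
      unfolding z_def by (rule jac)
    also have "\<dots> = scale 8 (br (A (1 + int n)) (A 0) - br (A (1 - int n)) (A 0))
                   + scale 8 (br (A 1) (A (0 + int n)) - br (A 1) (A (0 - int n)))"
      unfolding RG by (simp add: lin)
    also have "\<dots> = scale 8 (D 0 + G (int n - 1)) + scale 8 (- G (int n - 1) - D (- int n))"
      unfolding b1 b3 using b2 b4 by simp
    finally show ?thesis by (simp add: vs.scale_right_distrib[symmetric])
  qed
  have tele: "scale 8 (D 0 - D (- int j)) = scale (of_nat j) w" for j
  proof (induction j)
    case 0
    then show ?case by simp
  next
    case (Suc j)
    have ix: "D (- int (Suc j)) = D (- int j - 1)" by (rule arg_cong[of _ _ D]) simp
    have "scale 8 (D 0 - D (- int (Suc j))) = scale 8 (D 0 - D (- int j)) + scale 8 (D (- int j) - D (- int j - 1))"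
      unfolding ix by (simp add: vs.scale_right_distrib[symmetric])
    also have "\<dots> = scale (of_nat j) w + w" using Suc star[of "- int j"] by simp
    also have "\<dots> = scale (of_nat (Suc j)) w" by (simp add: vs.scale_left_distrib)
    finally show ?case .
  qed
  have "br (G (int n)) z = - w" unfolding w_def by (rule br_anti)
  hence "- w = scale (of_nat n) w" using E2 tele[of n] by simp
  hence "scale (of_nat n) w + w = 0" by (metis left_minus)
  hence "scale (of_nat n + 1) w = 0" by (simp add: vs.scale_left_distrib)
  hence w0: "w = 0" by (metis vs.scale_eq_0_iff of_nat_Suc of_nat_eq_0_iff nat.distinct(1) add.commute)
  have DD: "D k = D (k - 1)" for k using star[of k] w0 by simp
  have "D k = D 0" for k
  proof (induction k rule: int_induct[of _ 0])
    case base then show ?case ..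
  next
    case (step1 i) then show ?case using DD[of "i + 1"] by simp
  next
    case (step2 i) then show ?case using DD[of i] by simp
  qed
  hence "br (A (k + (int n + 1))) (A k) = br (A (int n + 1)) (A 0)" unfolding D_def by (simp add: add.assoc)
  moreover have "int (Suc n) = int n + 1" by simp
  ultimately show ?thesis by (simp only:)
qed


lemma Qall:
  fixes A :: "int \<Rightarrow> 'a"
  assumes rec: "\<And>m::int. A (m - 1) - A (m + 1) = scale (1/2) (br (A m) (scale (1/4) (br (A 1) (A 0))))"
    and Hall: "\<And>k. br (A (k + 1)) (A k) = br (A 1) (A 0)"
  shows "br (A (k + int n)) (A k) = br (A (int n)) (A 0)"
proof -
  have "\<forall>j\<le>n. \<forall>k. br (A (k + int j)) (A k) = br (A (int j)) (A 0)"
  proof (induction n)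
    case 0
    then show ?case by simp
  next
    case (Suc n)
    show ?case
    proof (intro allI impI)
      fix j k assume j: "j \<le> Suc n"
      show "br (A (k + int j)) (A k) = br (A (int j)) (A 0)"
      proof (cases "j \<le> n")
        case True
        then show ?thesis using Suc.IH by blast
      next
        case False
        hence jn: "j = Suc n" using j by simp
        show ?thesis
        proof (cases "n = 0")
          case True
          then show ?thesis using jn Hall[of k] by simp
        next
          case False
          hence "1 \<le> n" by simp
          then show ?thesis unfolding jn using Qstep[OF rec Hall, of n k] Suc.IH by blast
        qed
      qed
    qed
  qed
  thus ?thesis by blast
qed

theorem main_equiv:
  fixes A :: "int \<Rightarrow> 'a"
  assumes rec: "\<And>m::int. A (m - 1) - A (m + 1)
                = scale (1/2) (br (A m) (scale (1/4) (br (A 1) (A 0))))"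
  shows "(br (A 1) (br (A 1) (br (A 1) (A 0))) = scale 16 (br (A 1) (A 0)) \<and>
          br (A 0) (br (A 0) (br (A 0) (A 1))) = scale 16 (br (A 0) (A 1)))
     \<longleftrightarrow>
         (\<forall>m l::int.
            br (A m) (A l) = scale 4 (scale (1/4) (br (A (m - l)) (A 0))) \<and>
            br (A m) (scale (1/4) (br (A l) (A 0)))
              = scale 2 (A (m - l)) - scale 2 (A (m + l)) \<and>
            br (scale (1/4) (br (A m) (A 0))) (scale (1/4) (br (A l) (A 0))) = 0)"
proof
  assume dg: "br (A 1) (br (A 1) (br (A 1) (A 0))) = scale 16 (br (A 1) (A 0)) \<and>
          br (A 0) (br (A 0) (br (A 0) (A 1))) = scale 16 (br (A 0) (A 1))"
  have Hall: "br (A (k + 1)) (A k) = br (A 1) (A 0)" for k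
    using H_all[OF rec] dg by blast
  note Q = Qall[OF rec Hall]
  define G where "G l = br (A l) (A 0)" for l
  have Gneg: "G (- int n) = - G (int n)" for n
  proof -
    have "G (int n) = br (A 0) (A (- int n))" using Q[of "- int n" n] unfolding G_def by simp
    thus ?thesis unfolding G_def using br_anti[of "A (- int n)" "A 0"] by simp
  qed
  have R1: "br (A m) (A l) = G (m - l)" for m l
  proof (cases "m - l \<ge> 0")
    case True
    define n where "n = nat (m - l)"
    have e1: "A m = A (l + int n)" by (rule arg_cong[of _ _ A]) (use True in \<open>simp add: n_def\<close>)
    have e2: "m - l = int n" using True unfolding n_def by simp
    show ?thesis unfolding G_def e1 e2 by (rule Q)
  next
    case False
    define n where "n = nat (l - m)"
    have e: "l = m + int n" "m - l = - int n" using False unfolding n_def by simp_all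
    have "br (A m) (A l) = - br (A l) (A m)" by (rule br_anti)
    also have "\<dots> = - G (int n)" using Q[of m n] unfolding G_def e(1) by simp
    also have "\<dots> = G (m - l)" unfolding e(2) Gneg ..
    finally show ?thesis .
  qed
  have R2n: "br (A m) (G (int n)) = scale 8 (A (m - int n) - A (m + int n))" for m n
    unfolding G_def by (rule relA[OF rec Hall, of n]) (use Q in auto)
  have R2: "br (A m) (G l) = scale 8 (A (m - l) - A (m + l))" for m l
  proof (cases "l \<ge> 0")
    case True
    then obtain n where "l = int n" by (metis nonneg_eq_int)
    then show ?thesis using R2n by simp
  next
    case False
    define n where "n = nat (- l)"
    have e: "l = - int n" using False unfolding n_def by simp
    show ?thesis unfolding e Gneg br_neg_r R2n by (simp add: algebra_simps)
  qed
  have RG: "br (G l) (A m) = scale 8 (A (m + l) - A (m - l))" for m l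
    using R2[of m l] br_anti[of "G l" "A m"] by (simp add: algebra_simps)
  have R3: "br (G m) (G l) = 0" for m l
  proof -
    have "br (G m) (G l) = br (br (G m) (A l)) (A 0) + br (A l) (br (G m) (A 0))"
      unfolding G_def[of l] by (rule jac)
    also have "\<dots> = scale 8 (G (l + m) - G (l - m)) + scale 8 (br (A l) (A (0 + m)) - br (A l) (A (0 - m)))"
      unfolding RG by (simp add: lin G_def)
    also have "\<dots> = 0"
    proof -
      have idx: "G (l - (0 + m)) = G (l - m)" "G (l - (0 - m)) = G (l + m)" by (rule arg_cong[of _ _ G], simp)+
      show ?thesis unfolding R1 idx by (simp add: vs.scale_right_distrib[symmetric])
    qed
    finally show ?thesis .
  qed
  show "\<forall>m l::int.
            br (A m) (A l) = scale 4 (scale (1/4) (br (A (m - l)) (A 0))) \<and>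
            br (A m) (scale (1/4) (br (A l) (A 0)))
              = scale 2 (A (m - l)) - scale 2 (A (m + l)) \<and>
            br (scale (1/4) (br (A m) (A 0))) (scale (1/4) (br (A l) (A 0))) = 0"
  proof (intro allI conjI)
    fix m l :: int
    show "br (A m) (A l) = scale 4 (scale (1/4) (br (A (m - l)) (A 0)))"
      using R1[of m l] by (simp add: G_def)
    show "br (A m) (scale (1/4) (br (A l) (A 0))) = scale 2 (A (m - l)) - scale 2 (A (m + l))"
      using R2[of m l] by (simp add: G_def br_scale_r vs.scale_right_diff_distrib)
    show "br (scale (1/4) (br (A m) (A 0))) (scale (1/4) (br (A l) (A 0))) = 0"
      using R3[of m l] by (simp add: G_def br_scale_r br_scale_l)
  qed
next
  assume H: "\<forall>m l::int.
            br (A m) (A l) = scale 4 (scale (1/4) (br (A (m - l)) (A 0))) \<and>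
            br (A m) (scale (1/4) (br (A l) (A 0)))
              = scale 2 (A (m - l)) - scale 2 (A (m + l)) \<and>
            br (scale (1/4) (br (A m) (A 0))) (scale (1/4) (br (A l) (A 0))) = 0"
  have R1: "br (A m) (A l) = br (A (m - l)) (A 0)" for m l
    using H by simp
  have R2: "br (A m) (br (A l) (A 0)) = scale 8 (A (m - l)) - scale 8 (A (m + l))" for m l
  proof -
    have "br (A m) (scale (1/4) (br (A l) (A 0))) = scale 2 (A (m - l)) - scale 2 (A (m + l))"
      using H by blast
    hence "scale 4 (br (A m) (scale (1/4) (br (A l) (A 0)))) = scale 4 (scale 2 (A (m - l)) - scale 2 (A (m + l)))"
      by simp
    thus ?thesis by (simp add: br_scale_r vs.scale_right_diff_distrib)
  qed
  define z where "z = br (A 1) (A 0)"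
  have a: "br (A 1) (A 2) = - z"
    using R1[of 1 2] R1[of 0 1] br_anti[of "A 0" "A 1"] unfolding z_def by simp
  have b: "br (A 0) (A (-1)) = z"
    using R1[of 0 "-1"] unfolding z_def by simp
  have "br (A 1) (br (A 1) (br (A 1) (A 0))) = br (A 1) (scale 8 (A 0) - scale 8 (A 2))"
    using R2[of 1 1] by simp
  also have "\<dots> = scale 8 z - scale 8 (- z)" unfolding br_diff_r br_scale_r a z_def by simp
  also have "\<dots> = scale 16 z" by (simp add: comb_c1)
  finally have d1: "br (A 1) (br (A 1) (br (A 1) (A 0))) = scale 16 (br (A 1) (A 0))" unfolding z_def .
  have "br (A 0) (br (A 0) (br (A 0) (A 1))) = br (A 0) (br (A 0) (- z))"
    unfolding z_def using br_anti[of "A 0" "A 1"] by simp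
  also have "\<dots> = - br (A 0) (scale 8 (A (-1)) - scale 8 (A 1))"
    unfolding br_neg_r z_def using R2[of 0 1] by simp
  also have "\<dots> = - (scale 8 z - scale 8 (- z))" unfolding br_diff_r br_scale_r b
    using br_anti[of "A 0" "A 1"] by (simp add: z_def)
  also have "\<dots> = scale 16 (- z)" by (simp add: comb_c1)
  also have "- z = br (A 0) (A 1)" unfolding z_def by (rule br_anti[symmetric])
  finally have d0: "br (A 0) (br (A 0) (br (A 0) (A 1))) = scale 16 (br (A 0) (A 1))" .
  show "br (A 1) (br (A 1) (br (A 1) (A 0))) = scale 16 (br (A 1) (A 0)) \<and>
          br (A 0) (br (A 0) (br (A 0) (A 1))) = scale 16 (br (A 0) (A 1))"
    using d1 d0 by blast
qed

end

theorem theorem1: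
  fixes scale :: "complex \<Rightarrow> 'a::ab_group_add \<Rightarrow> 'a"
    and br :: "'a \<Rightarrow> 'a \<Rightarrow> 'a"
    and A :: "int \<Rightarrow> 'a"
  assumes lie: "lie_algebra scale br"
    and rec: "\<And>m::int. A (m - 1) - A (m + 1)
                = scale (1/2) (br (A m) (scale (1/4) (br (A 1) (A 0))))"
  shows "(br (A 1) (br (A 1) (br (A 1) (A 0))) = scale 16 (br (A 1) (A 0)) \<and>
          br (A 0) (br (A 0) (br (A 0) (A 1))) = scale 16 (br (A 0) (A 1)))
     \<longleftrightarrow>
         (\<forall>m l::int.
            br (A m) (A l) = scale 4 (scale (1/4) (br (A (m - l)) (A 0))) \<and>
            br (A m) (scale (1/4) (br (A l) (A 0)))
              = scale 2 (A (m - l)) - scale 2 (A (m + l)) \<and>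
            br (scale (1/4) (br (A m) (A 0))) (scale (1/4) (br (A l) (A 0))) = 0)"
proof -
  interpret lie scale br by (rule lie.intro) (rule lie)
  show ?thesis by (rule main_equiv[OF rec])
qed

end
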